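(* Let $G$ be an Abelian group and $(\rho,V)$ a linear representation of $G$ on a finite-dimensional vector space $V$ over a field $k$. Let $A$ be a nonempty finite subset of $G$ and $Y\neq\{0\}$ a $k$-subspace of $V$ with $\dim(A\cdot Y)\leq\alpha\dim(Y)$ for some $\alpha\in\mathbb{R}_{\geq0}$. Then there exists a $k$-subspace $Z\neq\{0\}$ of $Y$ such that $\dim(AC\cdot Z)\leq\alpha\dim(C\cdot Z)$ for every finite subset $C$ of $G$.
   Context: $g\cdot v=\rho(g)v$; for $S\subset G$ and a subspace $Z$, $S\cdot Z$ denotes the $k$-span of $\{s\cdot z\mid s\in S,z\in Z\}$; $AC=\{ac\mid a\in A,c\in C\}$. *)

theory Defs
  imports Complex_Main
begin

definition act_span ::
  "('k::field \<Rightarrow> 'v::ab_group_add \<Rightarrow> 'v) \<Rightarrow> ('g \<Rightarrow> 'v \<Rightarrow> 'v) \<Rightarrow> 'g set \<Rightarrow> 'v set \<Rightarrow> 'v set"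
  where "act_span scale rho S Z = module.span scale {rho s z | s z. s \<in> S \<and> z \<in> Z}"

text \<open>Product set AC (the group is written additively).\<close>
definition set_prod :: "'g::ab_group_add set \<Rightarrow> 'g set \<Rightarrow> 'g set"
  where "set_prod A C = {a + c | a c. a \<in> A \<and> c \<in> C}"

definition is_rep ::
  "('k::field \<Rightarrow> 'v::ab_group_add \<Rightarrow> 'v) \<Rightarrow> ('g::ab_group_add \<Rightarrow> 'v \<Rightarrow> 'v) \<Rightarrow> bool"
  where "is_rep scale rho \<longleftrightarrow>
     (\<forall>g. Vector_Spaces.linear scale scale (rho g)) \<and>
     rho 0 = id \<and> (\<forall>g h. rho (g + h) = rho g \<circ> rho h)"

end

theory Submission imports Defs begin

context finite_dimensional_vector_space begin

lemma lin_span_image: "Vector_Spaces.linear scale scale f \<Longrightarrow> span (f ` S) = f ` span S"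
  by (metis module_hom.span_image module_hom_iff_linear)

lemma lin_dim_image:
  assumes "Vector_Spaces.linear scale scale f" "inj f"
  shows "dim (f ` S) = dim S"
proof -
  interpret p: finite_dimensional_vector_space_pair_1 scale Basis scale
    by unfold_locales
  show ?thesis using p.dim_image_eq[OF assms(1)] assms(2) by (meson inj_on_subset subset_UNIV)
qed

lemma lin_zero: "Vector_Spaces.linear scale scale f \<Longrightarrow> f 0 = 0"
  by (metis module_hom.zero module_hom_iff_linear)
lemma lin_add: "Vector_Spaces.linear scale scale f \<Longrightarrow> f (x + y) = f x + f y"
  by (metis module_hom.add module_hom_iff_linear)
lemma lin_scale: "Vector_Spaces.linear scale scale f \<Longrightarrow> f (c *s x) = c *s f x"
  by (metis module_hom.scale module_hom_iff_linear)

context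
  fixes rho :: "'g::ab_group_add \<Rightarrow> 'b \<Rightarrow> 'b"
  assumes rep: "is_rep scale rho"
begin

lemma rho_lin: "Vector_Spaces.linear scale scale (rho g)"
  using rep unfolding is_rep_def by blast

lemma rho_comp: "rho g (rho h x) = rho (g + h) x"
  using rep unfolding is_rep_def by simp

lemma rho_inj: "inj (rho g)"
proof (rule injI)
  fix x y assume "rho g x = rho g y"
  then have "rho (-g) (rho g x) = rho (-g) (rho g y)" by simp
  then show "x = y" using rep unfolding is_rep_def by (simp add: rho_comp)
qed

lemma as_sub: "subspace (act_span scale rho S Z)"
  unfolding act_span_def by (rule subspace_span)

lemma as_mono: "S \<subseteq> S' \<Longrightarrow> Z \<subseteq> Z' \<Longrightarrow> act_span scale rho S Z \<subseteq> act_span scale rho S' Z'"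
  unfolding act_span_def by (rule span_mono) blast

lemma as_Un: "act_span scale rho (S \<union> T) Z =
   {x + y | x y. x \<in> act_span scale rho S Z \<and> y \<in> act_span scale rho T Z}"
proof -
  have "{rho s z | s z. s \<in> S \<union> T \<and> z \<in> Z} =
        {rho s z | s z. s \<in> S \<and> z \<in> Z} \<union> {rho s z | s z. s \<in> T \<and> z \<in> Z}" by blast
  then show ?thesis unfolding act_span_def by (simp add: span_Un)
qed

lemma as_img: "rho g ` act_span scale rho C Z = act_span scale rho ((\<lambda>c. g + c) ` C) Z"
proof -
  have "rho g ` {rho s z | s z. s \<in> C \<and> z \<in> Z} = {rho s z | s z. s \<in> (\<lambda>c. g + c) ` C \<and> z \<in> Z}"
  proof (rule set_eqI, rule iffI)
    fix x assume "x \<in> rho g ` {rho s z | s z. s \<in> C \<and> z \<in> Z}"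
    then obtain s z where "s \<in> C" "z \<in> Z" "x = rho g (rho s z)" by blast
    then show "x \<in> {rho s z | s z. s \<in> (\<lambda>c. g + c) ` C \<and> z \<in> Z}"
      by (auto simp: rho_comp)
  next
    fix x assume "x \<in> {rho s z | s z. s \<in> (\<lambda>c. g + c) ` C \<and> z \<in> Z}"
    then obtain s z where "s \<in> C" "z \<in> Z" "x = rho (g + s) z" by blast
    then have "x = rho g (rho s z)" "rho s z \<in> {rho s z | s z. s \<in> C \<and> z \<in> Z}"
      by (auto simp: rho_comp)
    then show "x \<in> rho g ` {rho s z | s z. s \<in> C \<and> z \<in> Z}" by (rule image_eqI)
  qed
  moreover have "rho g ` span {rho s z | s z. s \<in> C \<and> z \<in> Z} = span (rho g ` {rho s z | s z. s \<in> C \<and> z \<in> Z})"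
    by (rule lin_span_image[OF rho_lin, symmetric])
  ultimately show ?thesis unfolding act_span_def by simp
qed

lemma as_single:
  assumes Zs: "subspace Z"
  shows "act_span scale rho {g} Z = rho g ` Z"
proof -
  have "{rho s z | s z. s \<in> {g} \<and> z \<in> Z} = rho g ` Z" by blast
  then have "act_span scale rho {g} Z = span (rho g ` Z)" unfolding act_span_def by simp
  also have "\<dots> = rho g ` span Z" by (rule lin_span_image[OF rho_lin])
  also have "span Z = Z" using Zs by (rule span_eq_iff[THEN iffD2])
  finally show ?thesis .
qed

lemma sp_insert: "set_prod A (insert g C) = set_prod A C \<union> (\<lambda>a. g + a) ` A"
  unfolding set_prod_def by (auto simp: add.commute)

lemma sp_img: "a \<in> A \<Longrightarrow> (\<lambda>c. a + c) ` C \<subseteq> set_prod A C"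
  unfolding set_prod_def by auto

lemma as_empty: "act_span scale rho {} W = span {}"
  by (simp add: act_span_def)

lemma growth_step:
  assumes Zs: "subspace Z" and K0: "0 \<le> K"
    and hK: "\<And>Z'. subspace Z' \<Longrightarrow> Z' \<subseteq> Z \<Longrightarrow> K * real (dim Z') \<le> real (dim (act_span scale rho A Z'))"
    and eq: "real (dim (act_span scale rho A Z)) = K * real (dim Z)"
    and fin: "finite C"
  shows "real (dim (act_span scale rho (set_prod A C) Z)) \<le> K * real (dim (act_span scale rho C Z))"
  using fin
proof (induction C rule: finite_induct)
  case empty
  have "set_prod A {} = {}" by (simp add: set_prod_def)
  then show ?case by (simp add: as_empty)
next
  case (insert g C)
  define U where "U = act_span scale rho (set_prod A C) Z"
  define W where "W = rho g ` act_span scale rho A Z"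
  define P where "P = act_span scale rho C Z"
  define Q where "Q = rho g ` Z"
  define Z' where "Z' = {z \<in> Z. \<forall>a\<in>A. rho (g + a) z \<in> U}"
  have W_eq: "W = act_span scale rho ((\<lambda>a. g + a) ` A) Z" unfolding W_def by (rule as_img)
  have Q_eq: "Q = act_span scale rho {g} Z" unfolding Q_def using as_single[OF Zs] by simp
  have AC': "act_span scale rho (set_prod A (insert g C)) Z = {x + y | x y. x \<in> U \<and> y \<in> W}"
    unfolding sp_insert as_Un U_def W_eq ..
  have "insert g C = C \<union> {g}" by blast
  then have C': "act_span scale rho (insert g C) Z = {x + y | x y. x \<in> P \<and> y \<in> Q}"
    using as_Un[of C "{g}" Z] unfolding P_def Q_eq by simp
  have sU: "subspace U" "subspace W" "subspace P" "subspace Q"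
    unfolding U_def W_eq P_def Q_eq by (rule as_sub)+
  have dW: "dim W = dim (act_span scale rho A Z)"
    unfolding W_def by (rule lin_dim_image[OF rho_lin rho_inj])
  have dQ: "dim Q = dim Z"
    unfolding Q_def by (rule lin_dim_image[OF rho_lin rho_inj])
  have sZ': "subspace Z'"
  proof (rule subspaceI)
    have "\<forall>a\<in>A. rho (g + a) 0 \<in> U" using subspace_0[OF sU(1)] lin_zero[OF rho_lin] by metis
    then show "0 \<in> Z'" unfolding Z'_def using subspace_0[OF Zs] by blast
    fix x y c assume x: "x \<in> Z'" and y: "y \<in> Z'"
    have "\<forall>a\<in>A. rho (g + a) (x + y) \<in> U"
    proof
      fix a assume "a \<in> A"
      then have "rho (g + a) x \<in> U" "rho (g + a) y \<in> U" using x y unfolding Z'_def by blast+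
      then have "rho (g + a) x + rho (g + a) y \<in> U" by (rule subspace_add[OF sU(1)])
      then show "rho (g + a) (x + y) \<in> U" by (simp only: lin_add[OF rho_lin])
    qed
    moreover have "x + y \<in> Z" using x y unfolding Z'_def using subspace_add[OF Zs] by blast
    ultimately show "x + y \<in> Z'" unfolding Z'_def by blast
    have "\<forall>a\<in>A. rho (g + a) (c *s x) \<in> U"
    proof
      fix a assume "a \<in> A"
      then have "rho (g + a) x \<in> U" using x unfolding Z'_def by blast
      then have "c *s rho (g + a) x \<in> U" by (rule subspace_scale[OF sU(1)])
      then show "rho (g + a) (c *s x) \<in> U" by (simp only: lin_scale[OF rho_lin])
    qed
    moreover have "c *s x \<in> Z" using x unfolding Z'_def using subspace_scale[OF Zs] by blast
    ultimately show "c *s x \<in> Z'" unfolding Z'_def by blast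
  qed
  have Z'Z: "Z' \<subseteq> Z" unfolding Z'_def by blast
  have i1: "rho g ` act_span scale rho A Z' \<subseteq> U \<inter> W"
  proof
    fix x assume x: "x \<in> rho g ` act_span scale rho A Z'"
    then have xW: "x \<in> W" unfolding W_def using as_mono[OF order_refl Z'Z] by blast
    have "rho g ` act_span scale rho A Z' = act_span scale rho ((\<lambda>a. g + a) ` A) Z'" by (rule as_img)
    also have "\<dots> \<subseteq> U" unfolding act_span_def
    proof (rule span_minimal[OF _ sU(1)])
      show "{rho s z |s z. s \<in> (+) g ` A \<and> z \<in> Z'} \<subseteq> U"
      proof
        fix v assume "v \<in> {rho s z |s z. s \<in> (+) g ` A \<and> z \<in> Z'}"
        then obtain a z where "a \<in> A" "z \<in> Z'" "v = rho (g + a) z" by blast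
        then show "v \<in> U" unfolding Z'_def by blast
      qed
    qed
    finally show "x \<in> U \<inter> W" using x xW by blast
  qed
  have d1: "K * real (dim Z') \<le> real (dim (U \<inter> W))"
  proof -
    have "dim (rho g ` act_span scale rho A Z') \<le> dim (U \<inter> W)" using i1 by (rule dim_subset)
    then have "dim (act_span scale rho A Z') \<le> dim (U \<inter> W)"
      using lin_dim_image[OF rho_lin rho_inj] by simp
    then show ?thesis using hK[OF sZ' Z'Z] by linarith
  qed
  have i2: "P \<inter> Q \<subseteq> rho g ` Z'"
  proof
    fix x assume x: "x \<in> P \<inter> Q"
    then obtain z where z: "z \<in> Z" "x = rho g z" unfolding Q_def by blast
    have "\<forall>a\<in>A. rho (g + a) z \<in> U"
    proof
      fix a assume a: "a \<in> A"
      have e: "rho (g + a) z = rho a x" using z by (simp add: rho_comp add.commute)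
      have "x \<in> P" using x by (rule IntD1)
      then have m1: "rho a x \<in> rho a ` P" by (rule imageI)
      have m2: "rho a ` P \<subseteq> U" unfolding P_def U_def as_img
        by (rule as_mono[OF sp_img[OF a] order_refl])
      from m2 m1 have "rho a x \<in> U" by (rule subsetD)
      then show "rho (g + a) z \<in> U" by (simp only: e)
    qed
    then have "z \<in> Z'" unfolding Z'_def using z(1) by simp
    then show "x \<in> rho g ` Z'" unfolding z(2) by (rule imageI)
  qed
  have d2: "dim (P \<inter> Q) \<le> dim Z'"
    using dim_subset[OF i2] lin_dim_image[OF rho_lin rho_inj] by simp
  have f1: "dim {x + y | x y. x \<in> U \<and> y \<in> W} + dim (U \<inter> W) = dim U + dim W"
    by (rule dim_sums_Int[OF sU(1,2)])
  have f2: "dim {x + y | x y. x \<in> P \<and> y \<in> Q} + dim (P \<inter> Q) = dim P + dim Q"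
    by (rule dim_sums_Int[OF sU(3,4)])
  have IH: "real (dim U) \<le> K * real (dim P)" using insert.IH unfolding U_def P_def .
  have m: "K * real (dim (P \<inter> Q)) \<le> K * real (dim Z')"
    using d2 K0 by (simp add: mult_left_mono)
  have "real (dim {x + y | x y. x \<in> U \<and> y \<in> W}) \<le> K * real (dim {x + y | x y. x \<in> P \<and> y \<in> Q})"
  proof -
    have e1: "real (dim {x + y | x y. x \<in> U \<and> y \<in> W}) = real (dim U) + real (dim W) - real (dim (U \<inter> W))"
      using arg_cong[OF f1, of real] by simp
    have e2: "real (dim {x + y | x y. x \<in> P \<and> y \<in> Q}) = real (dim P) + real (dim Z) - real (dim (P \<inter> Q))"
      using arg_cong[OF f2, of real] dQ by simp
    have "K * real (dim {x + y | x y. x \<in> P \<and> y \<in> Q}) = K * real (dim P) + K * real (dim Z) - K * real (dim (P \<inter> Q))"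
      unfolding e2 by (simp add: algebra_simps)
    then show ?thesis using e1 IH d1 m dW eq by linarith
  qed
  then show ?case unfolding AC' C' .
qed

lemma main_loc:
  assumes Y_sub: "subspace Y" and Y_nz: "Y \<noteq> {0}"
    and alpha_nn: "\<alpha> \<ge> 0"
    and growth: "real (dim (act_span scale rho A Y)) \<le> \<alpha> * real (dim Y)"
  shows "\<exists>Z. subspace Z \<and> Z \<subseteq> Y \<and> Z \<noteq> {0} \<and>
           (\<forall>C. finite C \<longrightarrow>
              real (dim (act_span scale rho (set_prod A C) Z))
                \<le> \<alpha> * real (dim (act_span scale rho C Z)))"
proof -
  define S where "S = {Z. subspace Z \<and> Z \<subseteq> Y \<and> Z \<noteq> {0}}"
  define r where "r Z = real (dim (act_span scale rho A Z)) / real (dim Z)" for Z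
  have YS: "Y \<in> S" unfolding S_def using Y_sub Y_nz by blast
  have dpos: "dim Z > 0" if "subspace Z" "Z \<noteq> {0}" for Z
  proof -
    have "0 \<in> Z" using subspace_0[OF that(1)] .
    then have "\<not> Z \<subseteq> {0}" using that(2) by blast
    then show ?thesis using dim_eq_0[of Z] by linarith
  qed
  have "r ` S \<subseteq> (\<lambda>(p, q). real p / real q) ` ({..dimension} \<times> {..dimension})"
  proof
    fix x assume "x \<in> r ` S"
    then obtain Z where "x = r Z" by blast
    then have "x = (\<lambda>(p, q). real p / real q) (dim (act_span scale rho A Z), dim Z)"
      unfolding r_def by simp
    moreover have "(dim (act_span scale rho A Z), dim Z) \<in> {..dimension} \<times> {..dimension}"
      using dim_subset_UNIV by auto
    ultimately show "x \<in> (\<lambda>(p, q). real p / real q) ` ({..dimension} \<times> {..dimension})"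
      by (rule image_eqI)
  qed
  then have finS: "finite (r ` S)" by (rule finite_subset) simp
  define K where "K = Min (r ` S)"
  have "K \<in> r ` S" unfolding K_def using finS YS by (intro Min_in) auto
  then obtain Z where ZS: "Z \<in> S" and rZ: "r Z = K" by blast
  have Zs: "subspace Z" "Z \<subseteq> Y" "Z \<noteq> {0}" using ZS unfolding S_def by auto
  have K0: "0 \<le> K" unfolding rZ[symmetric] r_def by simp
  have KY: "K \<le> r Y" unfolding K_def using finS YS by simp
  have dY: "real (dim Y) > 0" using dpos[OF Y_sub Y_nz] by simp
  have "r Y \<le> \<alpha>" unfolding r_def using growth dY by (simp add: divide_le_eq)
  then have Ka: "K \<le> \<alpha>" using KY by linarith
  have hK: "K * real (dim Z') \<le> real (dim (act_span scale rho A Z'))"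
    if "subspace Z'" "Z' \<subseteq> Z" for Z'
  proof (cases "Z' = {0}")
    case True
    then show ?thesis by simp
  next
    case False
    then have "Z' \<in> S" unfolding S_def using that Zs(2) by blast
    then have "K \<le> r Z'" unfolding K_def using finS by simp
    moreover have "real (dim Z') > 0" using dpos[OF that(1) False] by simp
    ultimately show ?thesis unfolding r_def by (simp add: le_divide_eq)
  qed
  have dZ: "real (dim Z) > 0" using dpos[OF Zs(1,3)] by simp
  have eq: "real (dim (act_span scale rho A Z)) = K * real (dim Z)"
  proof -
    have "real (dim (act_span scale rho A Z)) = r Z * real (dim Z)"
      unfolding r_def using dZ by (simp del: dim_eq_0)
    then show ?thesis using rZ by simp
  qed
  have "real (dim (act_span scale rho (set_prod A C) Z)) \<le> \<alpha> * real (dim (act_span scale rho C Z))"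
    if "finite C" for C
  proof -
    have "real (dim (act_span scale rho (set_prod A C) Z)) \<le> K * real (dim (act_span scale rho C Z))"
      by (rule growth_step[OF Zs(1) K0 hK eq that])
    also have "\<dots> \<le> \<alpha> * real (dim (act_span scale rho C Z))"
      using Ka by (simp add: mult_right_mono)
    finally show ?thesis .
  qed
  then show ?thesis using Zs by blast
qed

end
end

theorem mainTheorem18:
  fixes scale :: "'k::field \<Rightarrow> 'v::ab_group_add \<Rightarrow> 'v"
    and rho :: "'g::ab_group_add \<Rightarrow> 'v \<Rightarrow> 'v"
    and A :: "'g set" and Y :: "'v set" and \<alpha> :: real
  assumes vs: "vector_space scale"
    and fin_dim: "\<exists>B. finite B \<and> module.span scale B = UNIV"
    and rep: "is_rep scale rho"
    and A_fin: "finite A" and A_ne: "A \<noteq> {}"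
    and Y_sub: "module.subspace scale Y" and Y_nz: "Y \<noteq> {0}"
    and alpha_nn: "\<alpha> \<ge> 0"
    and growth: "real (vector_space.dim scale (act_span scale rho A Y))
                   \<le> \<alpha> * real (vector_space.dim scale Y)"
  shows "\<exists>Z. module.subspace scale Z \<and> Z \<subseteq> Y \<and> Z \<noteq> {0} \<and>
           (\<forall>C. finite C \<longrightarrow>
              real (vector_space.dim scale (act_span scale rho (set_prod A C) Z))
                \<le> \<alpha> * real (vector_space.dim scale (act_span scale rho C Z)))"
proof -
  interpret v: vector_space scale by (rule vs)
  obtain B0 where B0: "finite B0" "v.span B0 = UNIV" using fin_dim by blast
  obtain B where B: "v.independent B" "UNIV \<subseteq> v.span B"
    using v.basis_exists[of UNIV] by blast
  have "finite B" using v.independent_span_bound[OF B0(1) B(1)] B0(2) by blast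
  interpret fd: finite_dimensional_vector_space scale B
    by unfold_locales (use B \<open>finite B\<close> in auto)
  show ?thesis by (rule fd.main_loc[OF rep Y_sub Y_nz alpha_nn growth])
qed

end
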